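(* Let $A,A'\in\mathbb{C}^{n\times n}$ with $\|A\|_F=\|A'\|_F=1$, let $v,v'\in\mathbb{C}^n$ be nonzero, and let $\lambda,\lambda'\in\mathbb{C}$ with $Av=\lambda v$. Suppose $\mu(A,\lambda,v)\big(\|A'-A\|_F+|\lambda'-\lambda|+d_{\mathbb{P}}(v',v)\big)\le\frac{\varepsilon}{7.2}$ for some $0<\varepsilon\le0.37$. Then $\frac1{1+\varepsilon}\mu(A,\lambda,v)\le\mu(A',\lambda',v')\le(1+\varepsilon)\mu(A,\lambda,v)$.
   Context: $\|\cdot\|_F$ is the Frobenius norm. $d_{\mathbb{P}}(v,v')=\arccos(|\langle v,v'\rangle|/(\|v\|\|v'\|))$. For $v\ne0$, $T_v=v^\perp$, $P_{v^\perp}$ the orthogonal projection onto $T_v$, $A_{\lambda,v}=P_{v^\perp}(A-\lambda\mathrm{Id})|_{T_v}$, and $\mu(A,\lambda,v)=\|A\|_F\|A_{\lambda,v}^{-1}\|$ (operator norm; $\infty$ if not invertible). *)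

theory Defs
  imports "HOL-Analysis.Analysis" "HOL-Library.Extended_Real"
begin

definition cinner :: "complex ^ 'n \<Rightarrow> complex ^ 'n \<Rightarrow> complex" where
  "cinner x y = (\<Sum>i\<in>UNIV. x $ i * cnj (y $ i))"

definition frob :: "complex ^ 'n ^ 'n \<Rightarrow> real" where
  "frob A = sqrt (\<Sum>i\<in>UNIV. \<Sum>j\<in>UNIV. (cmod (A $ i $ j))\<^sup>2)"

definition dP :: "complex ^ 'n \<Rightarrow> complex ^ 'n \<Rightarrow> real" where
  "dP v v' = arccos (cmod (cinner v v') / (norm v * norm v'))"

definition tangent :: "complex ^ 'n \<Rightarrow> (complex ^ 'n) set" where
  "tangent v = {x. cinner x v = 0}"

definition proj_perp :: "complex ^ 'n \<Rightarrow> complex ^ 'n \<Rightarrow> complex ^ 'n" where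
  "proj_perp v x = x - (cinner x v / cinner v v) *s v"

text \<open>A_{lambda,v} as a map (to be considered on tangent v).\<close>
definition Alv :: "complex ^ 'n ^ 'n \<Rightarrow> complex \<Rightarrow> complex ^ 'n \<Rightarrow> complex ^ 'n \<Rightarrow> complex ^ 'n" where
  "Alv A l v x = proj_perp v (A *v x - l *s x)"

text \<open>Operator norm of the inverse of A_{lambda,v} on T_v (infinity if not invertible),
  in the extended reals; on the zero space the operator norm is 0.\<close>
definition inv_opnorm :: "complex ^ 'n ^ 'n \<Rightarrow> complex \<Rightarrow> complex ^ 'n \<Rightarrow> ereal" where
  "inv_opnorm A l v =
    (if bij_betw (Alv A l v) (tangent v) (tangent v)
     then Sup ({0} \<union> {ereal (norm (inv_into (tangent v) (Alv A l v) y) / norm y) | y.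
                         y \<in> tangent v \<and> y \<noteq> 0})
     else \<infinity>)"

definition mu :: "complex ^ 'n ^ 'n \<Rightarrow> complex \<Rightarrow> complex ^ 'n \<Rightarrow> ereal" where
  "mu A l v = ereal (frob A) * inv_opnorm A l v"

end

theory Submission
  imports Defs
begin


lemma cinner_add_left: "cinner (x + y) z = cinner x z + cinner y z"
  by (simp add: cinner_def distrib_right sum.distrib)
lemma cinner_diff_left: "cinner (x - y) z = cinner x z - cinner y z"
  by (simp add: cinner_def left_diff_distrib sum_subtractf)
lemma cinner_scale_left: "cinner (c *s x) z = c * cinner x z"
  by (simp add: cinner_def sum_distrib_left mult.assoc)
lemma cinner_commute: "cinner y x = cnj (cinner x y)"
  by (simp add: cinner_def mult.commute)
lemma cinner_add_right: "cinner z (x + y) = cinner z x + cinner z y"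
  by (simp add: cinner_def distrib_left sum.distrib)
lemma cinner_diff_right: "cinner z (x - y) = cinner z x - cinner z y"
  by (simp add: cinner_def right_diff_distrib sum_subtractf)
lemma cinner_scale_right: "cinner z (c *s x) = cnj c * cinner z x"
  by (simp add: cinner_def sum_distrib_left mult.assoc mult.left_commute)
lemma cinner_zero_left[simp]: "cinner 0 x = 0" by (simp add: cinner_def)
lemma cinner_zero_right[simp]: "cinner x 0 = 0" by (simp add: cinner_def)

lemma norm_sq_vec: "(norm (x::complex^'n))\<^sup>2 = (\<Sum>i\<in>UNIV. (cmod (x$i))\<^sup>2)"
  by (simp add: norm_vec_def L2_set_def sum_nonneg)

lemma cinner_self: "cinner x x = complex_of_real ((norm x)\<^sup>2)"
  unfolding cinner_def norm_sq_vec of_real_sum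
  by (intro sum.cong refl) (rule complex_norm_square[symmetric])

lemma norm_scale: "norm (c *s (x::complex^'n)) = cmod c * norm x"
proof -
  have "(norm (c *s x))\<^sup>2 = (cmod c * norm x)\<^sup>2"
    unfolding norm_sq_vec power_mult_distrib sum_distrib_left
    by (simp add: norm_mult power_mult_distrib)
  thus ?thesis by (simp add: power2_eq_iff_nonneg)
qed

lemma cinner_self_real: "cinner x x = complex_of_real (Re (cinner x x))"
  by (simp add: cinner_self)

lemma pythag:
  assumes "y \<noteq> 0"
  shows "(norm (proj_perp y x))\<^sup>2 = (norm x)\<^sup>2 - (cmod (cinner x y))\<^sup>2 / (norm y)\<^sup>2"
proof -
  define N where "N = (norm y)\<^sup>2"
  have N0: "N > 0" using assms by (simp add: N_def)
  define p where "p = cinner x y"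
  define t where "t = p / complex_of_real N"
  have yy: "cinner y y = complex_of_real N" by (simp add: N_def cinner_self)
  have yx: "cinner y x = cnj p" by (simp add: p_def cinner_commute[of x y])
  have ct: "cnj t = cnj p / complex_of_real N" by (simp add: t_def)
  have "complex_of_real ((norm (proj_perp y x))\<^sup>2) = cinner (x - t *s y) (x - t *s y)"
    by (simp add: cinner_self proj_perp_def t_def p_def yy N_def)
  also have "\<dots> = cinner x x - cnj t * p - t * cnj p + t * cnj t * complex_of_real N"
    by (simp add: cinner_diff_left cinner_diff_right cinner_scale_left cinner_scale_right yy yx p_def algebra_simps)
  also have "\<dots> = cinner x x - p * cnj p / complex_of_real N"
    using N0 by (simp add: ct t_def field_simps)
  also have "\<dots> = complex_of_real ((norm x)\<^sup>2 - (cmod p)\<^sup>2 / N)"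
    by (simp only: complex_norm_square cinner_self of_real_diff of_real_divide)
  finally have "(norm (proj_perp y x))\<^sup>2 = (norm x)\<^sup>2 - (cmod p)\<^sup>2 / N"
    by (rule of_real_eq_iff[THEN iffD1])
  thus ?thesis by (simp add: N_def p_def)
qed

lemma cs: "cmod (cinner x y) \<le> norm x * norm y"
proof (cases "y = 0")
  case False
  have "(cmod (cinner x y))\<^sup>2 / (norm y)\<^sup>2 \<le> (norm x)\<^sup>2"
    using pythag[OF False, of x] by (metis diff_ge_0_iff_ge zero_le_power2)
  hence "(cmod (cinner x y))\<^sup>2 \<le> (norm x * norm y)\<^sup>2"
    using False by (simp add: divide_le_eq power_mult_distrib)
  thus ?thesis by (simp add: abs_le_square_iff[symmetric])
qed simp

lemma proj_perp_orth: "v \<noteq> 0 \<Longrightarrow> cinner (proj_perp v x) v = 0"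
  by (simp add: proj_perp_def cinner_diff_left cinner_scale_left cinner_self)

lemma proj_perp_norm_le: "norm (proj_perp v x) \<le> norm x"
proof (cases "v = 0")
  case True thus ?thesis by (simp add: proj_perp_def)
next
  case False
  have "(norm (proj_perp v x))\<^sup>2 \<le> (norm x)\<^sup>2" using pythag[OF False, of x] by simp
  thus ?thesis by (simp add: power2_le_iff_abs_le)
qed

lemma proj_perp_diff: "proj_perp v (a - b) = proj_perp v a - proj_perp v b"
  by (simp add: proj_perp_def vec_eq_iff cinner_diff_left diff_divide_distrib algebra_simps)
lemma proj_perp_add: "proj_perp v (a + b) = proj_perp v a + proj_perp v b"
  by (simp add: proj_perp_def vec_eq_iff cinner_add_left add_divide_distrib algebra_simps)
lemma proj_perp_scale: "proj_perp v (c *s a) = c *s proj_perp v a"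
  by (simp add: proj_perp_def vec_eq_iff cinner_scale_left algebra_simps)
lemma proj_perp_self: "v \<noteq> 0 \<Longrightarrow> proj_perp v (c *s v) = 0"
  by (simp add: proj_perp_def vec_eq_iff cinner_scale_left cinner_self)
lemma proj_perp_zero[simp]: "proj_perp v 0 = 0"
  by (simp add: proj_perp_def)

lemma norm_minus_proj:
  assumes "v \<noteq> 0"
  shows "norm (x - proj_perp v x) = cmod (cinner x v) / norm v"
proof -
  have "x - proj_perp v x = (cinner x v / cinner v v) *s v" by (simp add: proj_perp_def)
  hence "norm (x - proj_perp v x) = cmod (cinner x v) / (norm v)\<^sup>2 * norm v"
    by (simp add: norm_scale cinner_self norm_divide norm_power)
  thus ?thesis using assms by (simp add: power2_eq_square)
qed

lemma orth_bound:
  assumes "p \<noteq> 0" "cinner x p = 0"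
  shows "cmod (cinner x q) \<le> norm x * norm (proj_perp p q)"
proof -
  have "cinner x q = cinner x (proj_perp p q)"
    by (simp add: proj_perp_def cinner_diff_right cinner_scale_right assms)
  thus ?thesis using cs by simp
qed

lemma norm_proj_perp_eq:
  assumes "p \<noteq> 0" "q \<noteq> 0"
  shows "norm (proj_perp p q) = norm q * sqrt (1 - (cmod (cinner q p) / (norm q * norm p))\<^sup>2)"
proof -
  have le0: "(cmod (cinner q p) / (norm q * norm p))\<^sup>2 \<le> 1"
    using cs[of q p] assms by (simp add: power_le_one divide_le_eq_1)
  have "(norm (proj_perp p q))\<^sup>2 = (norm q)\<^sup>2 - (cmod (cinner q p))\<^sup>2 / (norm p)\<^sup>2"
    using pythag[OF assms(1)] by simp
  also have "\<dots> = (norm q * sqrt (1 - (cmod (cinner q p) / (norm q * norm p))\<^sup>2))\<^sup>2"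
  proof -
    have le: "(cmod (cinner q p) / (norm q * norm p))\<^sup>2 \<le> 1"
      using cs[of q p] assms by (simp add: power_le_one divide_le_eq_1)
    define X where "X = 1 - (cmod (cinner q p) / (norm q * norm p))\<^sup>2"
    have X: "0 \<le> X" using le by (simp add: X_def)
    have "(norm q * sqrt X)\<^sup>2 = (norm q)\<^sup>2 * X" using X by (simp add: power_mult_distrib)
    also have "\<dots> = (norm q)\<^sup>2 - (cmod (cinner q p))\<^sup>2 / (norm p)\<^sup>2"
      using assms by (simp add: X_def power_divide power_mult_distrib right_diff_distrib)
    finally show ?thesis by (simp add: X_def)
  qed
  finally have eq2: "(norm (proj_perp p q))\<^sup>2 = (norm q * sqrt (1 - (cmod (cinner q p) / (norm q * norm p))\<^sup>2))\<^sup>2" .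
  have nn: "0 \<le> norm q * sqrt (1 - (cmod (cinner q p) / (norm q * norm p))\<^sup>2)"
    using le0 by (intro mult_nonneg_nonneg real_sqrt_ge_zero) simp_all
  show ?thesis by (rule power2_eq_imp_eq[OF eq2 norm_ge_zero nn])
qed

lemma cmod_cinner_sym: "cmod (cinner p q) = cmod (cinner q p)"
  by (simp add: cinner_commute[of p q])

lemma proj_compare:
  assumes "p \<noteq> 0" "q \<noteq> 0"
  shows "norm (proj_perp q u) \<le> norm (proj_perp p u) + norm u * (norm (proj_perp q p) / norm p)"
proof -
  define \<alpha> where "\<alpha> = cinner u p / cinner p p"
  have eq: "proj_perp q u = proj_perp q (proj_perp p u) + \<alpha> *s proj_perp q p"
    by (simp add: proj_perp_def[of p u] proj_perp_diff proj_perp_scale \<alpha>_def)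
  have a: "cmod \<alpha> \<le> norm u / norm p"
  proof -
    have "cmod \<alpha> = cmod (cinner u p) / (norm p)\<^sup>2"
      by (simp add: \<alpha>_def cinner_self norm_divide norm_power)
    also have "\<dots> \<le> norm u * norm p / (norm p)\<^sup>2"
      by (intro divide_right_mono cs) simp
    also have "\<dots> = norm u / norm p" using assms by (simp add: power2_eq_square)
    finally show ?thesis .
  qed
  have "norm (proj_perp q u) \<le> norm (proj_perp q (proj_perp p u)) + cmod \<alpha> * norm (proj_perp q p)"
    unfolding eq by (metis norm_triangle_ineq norm_scale)
  also have "\<dots> \<le> norm (proj_perp p u) + norm u / norm p * norm (proj_perp q p)"
    by (intro add_mono proj_perp_norm_le mult_right_mono a) simp
  finally show ?thesis by simp
qed

lemma frob_nonneg: "frob A \<ge> 0"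
  by (simp add: frob_def sum_nonneg)

lemma mat_scale: "(A::complex^'n^'m) *v (c *s x) = c *s (A *v x)"
  by (rule vector_scalar_commute)

lemma norm_mat: "norm ((A::complex^'n^'n) *v x) \<le> frob A * norm x"
proof -
  have "(norm (A *v x))\<^sup>2 = (\<Sum>i\<in>UNIV. (cmod (\<Sum>j\<in>UNIV. A$i$j * x$j))\<^sup>2)"
    by (simp only: norm_sq_vec matrix_vector_mult_def vec_lambda_beta)
  also have "\<dots> \<le> (\<Sum>i\<in>UNIV. (\<Sum>j\<in>UNIV. (cmod (A$i$j))\<^sup>2) * (\<Sum>j\<in>UNIV. (cmod (x$j))\<^sup>2))"
  proof (rule sum_mono)
    fix i
    have "cmod (\<Sum>j\<in>UNIV. A$i$j * x$j) \<le> (\<Sum>j\<in>UNIV. cmod (A$i$j) * cmod (x$j))"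
      using norm_sum[of "\<lambda>j. A$i$j * x$j" UNIV] by (simp add: norm_mult)
    hence "(cmod (\<Sum>j\<in>UNIV. A$i$j * x$j))\<^sup>2 \<le> (\<Sum>j\<in>UNIV. cmod (A$i$j) * cmod (x$j))\<^sup>2"
      by (rule power_mono[OF _ norm_ge_zero])
    also have "\<dots> \<le> (\<Sum>j\<in>UNIV. (cmod (A$i$j))\<^sup>2) * (\<Sum>j\<in>UNIV. (cmod (x$j))\<^sup>2)"
      by (rule Cauchy_Schwarz_ineq_sum)
    finally show "(cmod (\<Sum>j\<in>UNIV. A$i$j * x$j))\<^sup>2 \<le> (\<Sum>j\<in>UNIV. (cmod (A$i$j))\<^sup>2) * (\<Sum>j\<in>UNIV. (cmod (x$j))\<^sup>2)" .
  qed
  also have "\<dots> = (\<Sum>i\<in>UNIV. (\<Sum>j\<in>UNIV. (cmod (A$i$j))\<^sup>2)) * (norm x)\<^sup>2"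
    by (simp only: sum_distrib_right norm_sq_vec)
  also have "\<dots> = (frob A * norm x)\<^sup>2"
  proof -
    have "(frob A)\<^sup>2 = (\<Sum>i\<in>UNIV. (\<Sum>j\<in>UNIV. (cmod (A$i$j))\<^sup>2))"
      unfolding frob_def by (rule real_sqrt_pow2) (simp add: sum_nonneg)
    thus ?thesis by (simp only: power_mult_distrib)
  qed
  finally have calc: "(norm (A *v x))\<^sup>2 \<le> (frob A * norm x)\<^sup>2" .
  show ?thesis by (rule power2_le_imp_le[OF calc mult_nonneg_nonneg[OF frob_nonneg norm_ge_zero]])
qed



lemma scaleR_s: "r *\<^sub>R (x::complex^'n) = complex_of_real r *s x"
proof (rule iffD2[OF vec_eq_iff], rule allI)
  fix i show "(r *\<^sub>R x) $ i = (complex_of_real r *s x) $ i"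
    by (simp only: vector_scaleR_component vector_smult_component) (rule scaleR_conv_of_real)
qed

lemma tangent_subspace: "subspace (tangent v)"
  unfolding subspace_def tangent_def
  by (auto simp: cinner_add_left scaleR_s cinner_scale_left)

lemma Alv_add: "Alv A l v (x + y) = Alv A l v x + Alv A l v y"
proof -
  have e: "A *v (x + y) - l *s (x + y) = (A *v x - l *s x) + (A *v y - l *s y)"
    by (simp add: matrix_vector_right_distrib vector_add_ldistrib)
  show ?thesis unfolding Alv_def e by (rule proj_perp_add)
qed

lemma Alv_scale: "Alv A l v (c *s x) = c *s Alv A l v x"
proof -
  have "l *s (c *s x) = c *s (l *s x)" by (simp add: vec_eq_iff mult.left_commute)
  hence e: "A *v (c *s x) - l *s (c *s x) = c *s (A *v x - l *s x)"
    by (simp add: mat_scale vector_ssub_ldistrib)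
  show ?thesis unfolding Alv_def e by (rule proj_perp_scale)
qed

lemma Alv_diff: "Alv A l v (x - y) = Alv A l v x - Alv A l v y"
proof -
  have e: "A *v (x - y) - l *s (x - y) = (A *v x - l *s x) - (A *v y - l *s y)"
    by (simp add: matrix_vector_mult_diff_distrib vector_ssub_ldistrib)
  show ?thesis unfolding Alv_def e by (rule proj_perp_diff)
qed

lemma Alv_linear: "linear (Alv A l v)"
  by (rule linearI) (simp_all add: Alv_add scaleR_s Alv_scale)

lemma Alv_maps: "v \<noteq> 0 \<Longrightarrow> Alv A l v x \<in> tangent v"
  by (simp add: tangent_def Alv_def proj_perp_orth)

lemma Alv_zero[simp]: "Alv A l v 0 = 0"
  by (simp add: Alv_def)

lemma G_nonneg: "inv_opnorm A l v \<ge> 0"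
  unfolding inv_opnorm_def by (auto intro: Sup_upper)

lemma G_finite:
  assumes "inv_opnorm A l v = ereal m" "x \<in> tangent v"
  shows "norm x \<le> m * norm (Alv A l v x)"
proof -
  let ?F = "Alv A l v" and ?S = "tangent v"
  have bij: "bij_betw ?F ?S ?S" using assms(1) unfolding inv_opnorm_def by (auto split: if_splits)
  have m0: "m \<ge> 0" using G_nonneg[of A l v] assms(1) by simp
  show ?thesis
  proof (cases "x = 0")
    case True thus ?thesis using m0 by simp
  next
    case False
    have z: "0 \<in> ?S" by (simp add: tangent_def)
    have inj: "inj_on ?F ?S" using bij by (simp add: bij_betw_def)
    have y0: "?F x \<noteq> 0" using inj_onD[OF inj _ assms(2) z] False by auto
    have yS: "?F x \<in> ?S" using bij assms(2) by (auto simp: bij_betw_def)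
    have inv: "inv_into ?S ?F (?F x) = x" using inv_into_f_f[OF inj assms(2)] .
    have "ereal (norm x / norm (?F x)) \<in> {0} \<union> {ereal (norm (inv_into ?S ?F y) / norm y) | y. y \<in> ?S \<and> y \<noteq> 0}"
      using yS y0 inv by force
    hence "ereal (norm x / norm (?F x)) \<le> Sup ({0} \<union> {ereal (norm (inv_into ?S ?F y) / norm y) | y. y \<in> ?S \<and> y \<noteq> 0})"
      by (rule Sup_upper)
    hence "ereal (norm x / norm (?F x)) \<le> inv_opnorm A l v"
      unfolding inv_opnorm_def using bij by simp
    hence "norm x / norm (?F x) \<le> m" using assms(1) by simp
    thus ?thesis using y0 by (simp add: divide_le_eq mult.commute)
  qed
qed

lemma G_bound:
  assumes v: "v \<noteq> 0" and C: "C \<ge> 0" and H: "\<forall>x\<in>tangent v. norm x \<le> C * norm (Alv A l v x)"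
  shows "inv_opnorm A l v \<le> ereal C"
proof -
  let ?F = "Alv A l v" and ?S = "tangent v"
  have lin: "linear ?F" by (rule Alv_linear)
  have sub: "subspace ?S" by (rule tangent_subspace)
  have inj: "inj_on ?F ?S"
  proof (rule inj_onI)
    fix x y assume "x \<in> ?S" "y \<in> ?S" "?F x = ?F y"
    hence "x - y \<in> ?S" "?F (x - y) = 0" using sub by (auto simp: Alv_diff subspace_diff)
    hence "norm (x - y) \<le> 0" using H by force
    thus "x = y" by simp
  qed
  have img: "?F ` ?S \<subseteq> ?S" using Alv_maps[OF v] by auto
  have "?F ` ?S = ?S"
  proof (rule subspace_dim_equal)
    show "subspace (?F ` ?S)" using lin sub by (rule linear_subspace_image)
    show "subspace ?S" by (rule sub)
    show "?F ` ?S \<subseteq> ?S" by (rule img)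
    have sp: "span ?S = ?S" using sub by (simp add: span_eq_iff)
    have "inj_on ?F (span ?S)" unfolding sp by (rule inj)
    thus "dim ?S \<le> dim (?F ` ?S)" using dim_image_eq[OF lin] by simp
  qed
  hence bij: "bij_betw ?F ?S ?S" using inj by (simp add: bij_betw_def)
  have "Sup ({0} \<union> {ereal (norm (inv_into ?S ?F y) / norm y) | y. y \<in> ?S \<and> y \<noteq> 0}) \<le> ereal C"
  proof (rule Sup_least)
    fix z assume "z \<in> {0} \<union> {ereal (norm (inv_into ?S ?F y) / norm y) | y. y \<in> ?S \<and> y \<noteq> 0}"
    then consider "z = 0" | y where "z = ereal (norm (inv_into ?S ?F y) / norm y)" "y \<in> ?S" "y \<noteq> 0" by blast
    thus "z \<le> ereal C"
    proof cases
      case 1 thus ?thesis using C by simp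
    next
      case 2
      have yi: "y \<in> ?F ` ?S" using 2 \<open>?F ` ?S = ?S\<close> by simp
      have xS: "inv_into ?S ?F y \<in> ?S" using inv_into_into[OF yi] .
      have fx: "?F (inv_into ?S ?F y) = y" using f_inv_into_f[OF yi] .
      have "norm (inv_into ?S ?F y) \<le> C * norm y" using H xS fx by force
      hence "norm (inv_into ?S ?F y) / norm y \<le> C" using 2 by (simp add: divide_le_eq)
      thus ?thesis using 2 by simp
    qed
  qed
  thus ?thesis unfolding inv_opnorm_def using bij by simp
qed



lemma ar_t:
  fixes t e :: real
  assumes "0 \<le> t" "t \<le> e * (5/36)" "0 < e" "e \<le> 37/100"
  shows "1 \<le> (1 + e) * (1 - 4*t - 2*t\<^sup>2)"
proof -
  have t2: "t\<^sup>2 \<le> t * (e*(5/36))" using mult_left_mono[OF assms(2) assms(1)] by (simp add: power2_eq_square)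
  have t3: "t * (e*(5/36)) \<le> (e*(5/36)) * (e*(5/36))" using assms by (simp add: mult_right_mono)
  have ee: "e * e \<le> (37/100) * e" using assms by (simp add: mult_right_mono)
  have eee: "e * (e * e) \<le> (37/100) * (e * e)" using mult_left_mono[OF ee, of e] assms by (simp add: algebra_simps)
  have "4*t + 2*t\<^sup>2 \<le> 4*(e*(5/36)) + 2*((e*(5/36))*(e*(5/36)))" using t2 t3 assms by linarith
  hence "(1 + e) * (1 - 4*(e*(5/36)) - 2*((e*(5/36))*(e*(5/36)))) \<le> (1 + e) * (1 - 4*t - 2*t\<^sup>2)"
    using assms by (intro mult_left_mono) auto
  moreover have "1 \<le> (1 + e) * (1 - 4*(e*(5/36)) - 2*((e*(5/36))*(e*(5/36))))"
  proof -
    have "(1 + e) * (1 - 4*(e*(5/36)) - 2*((e*(5/36))*(e*(5/36)))) = 1 + (4/9) * e - (385/648) * (e*e) - (25/648) * (e*(e*e))"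
      by (simp add: field_simps power2_eq_square)
    thus ?thesis using ee eee assms by linarith
  qed
  ultimately show ?thesis by linarith
qed

lemma ar_k:
  fixes m s d a b t :: real
  assumes "m \<ge> 1/2" "0 \<le> s" "s \<le> d" "0 \<le> a" "0 \<le> b" "t = m * (a + b + d)"
  shows "s + m * (a + b + (2 + b) * s) \<le> 4*t + 2*t\<^sup>2"
proof -
  have m0: "m \<ge> 0" using assms by simp
  have d0: "0 \<le> d" using assms by simp
  have sd: "s \<le> 2 * (m * d)" using assms mult_right_mono[of 1 "2*m" d] by simp
  have msd: "m * s \<le> m * d" using assms m0 by (simp add: mult_left_mono)
  have mbs: "m * b * s \<le> m * b * (2 * (m * d))" using sd m0 assms by (simp add: mult_left_mono)
  have mb: "m * b \<le> t" using assms m0 d0 by (simp add: algebra_simps)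
  have md: "m * d \<le> t" using assms m0 by (simp add: algebra_simps)
  have "m * b * (m * d) \<le> t * t" using mb md m0 assms d0 by (intro mult_mono) auto
  hence mbs2: "m * b * s \<le> 2 * t\<^sup>2" using mbs by (simp add: power2_eq_square algebra_simps)
  have "s + m * (a + b + (2 + b) * s) = s + m*a + m*b + 2*(m * s) + m*b * s" by (simp add: algebra_simps)
  also have "\<dots> \<le> 4*t + 2*t\<^sup>2"
  proof -
    have ht: "t = m*a + m*b + m*d" using assms by (simp add: algebra_simps)
    have "0 \<le> m*a" "0 \<le> m*b" using assms m0 by simp_all
    thus ?thesis using ht sd msd mbs2 by linarith
  qed
  finally show ?thesis .
qed

lemma ar_t2:
  fixes t e :: real
  assumes "0 \<le> t" "t \<le> e * (5/36)" "0 < e" "e \<le> 37/100"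
  shows "1 + 2*t + 4*t\<^sup>2 \<le> (1 + e) * (1 - 2*t)"
proof -
  have t2: "t * t \<le> (t * e) * (5/36)" using mult_left_mono[OF assms(2) assms(1)] by simp
  have et0: "e * t \<le> (e * e) * (5/36)" using mult_left_mono[OF assms(2), of e] assms by simp
  have ee: "e * e \<le> (37/100) * e" using assms by (simp add: mult_right_mono)
  have te: "t * e = e * t" by simp
  have et: "e * t \<le> (37/100) * e * (5/36)" using et0 ee by linarith
  have tt: "t * t \<le> (37/100) * e * (5/36) * (5/36)" using t2 et te by linarith
  have "(1 + e) * (1 - 2*t) - (1 + 2*t + 4*t\<^sup>2) = e - 4*t - 4*(t*t) - 2*(e*t)"
    by (simp add: algebra_simps power2_eq_square)
  thus ?thesis using tt et assms by linarith
qed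

lemma ar_k2:
  fixes m s d a b t :: real
  assumes "m \<ge> 1/2" "0 \<le> s" "s \<le> d" "0 \<le> a" "0 \<le> b" "t = m * (a + b + d)"
  shows "m * (2 * s + 2 * s\<^sup>2 + a + b) \<le> 2*t + 4*t\<^sup>2 \<and> s \<le> 2*t"
proof -
  have m0: "m \<ge> 0" using assms by simp
  have d0: "0 \<le> d" using assms by simp
  have sd: "s \<le> 2 * (m * d)" using assms mult_right_mono[of 1 "2*m" d] by simp
  have msd: "m * s \<le> m * d" using assms m0 by (simp add: mult_left_mono)
  have md: "m * d \<le> t" using assms m0 by (simp add: algebra_simps)
  have s2t: "s \<le> 2 * t" using sd md by simp
  have "m * s * s \<le> t * (2 * t)" using msd md s2t assms m0 by (intro mult_mono) auto
  hence "m * s\<^sup>2 \<le> 2 * t\<^sup>2" by (simp add: power2_eq_square algebra_simps)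
  moreover have "m * (2 * s + 2 * s\<^sup>2 + a + b) = 2*(m * s) + 2*(m * s\<^sup>2) + m*a + m*b" by (simp add: algebra_simps)
  moreover have ht: "t = m*a + m*b + m*d" using assms by (simp add: algebra_simps)
  moreover have "0 \<le> m*a" "0 \<le> m*b" using assms m0 by simp_all
  ultimately have "m * (2 * s + 2 * s\<^sup>2 + a + b) \<le> 2*t + 4*t\<^sup>2" using msd by linarith
  thus ?thesis using s2t by simp
qed


lemma kill_eig:
  fixes A :: "complex^'n^'n"
  assumes eig: "A *v v = l *s v" shows "A *v (\<beta> *s v) - l *s (\<beta> *s v) = 0"
proof -
  have 1: "A *v (\<beta> *s v) = (\<beta> * l) *s v" by (simp add: mat_scale vector_smult_assoc eig)
  have 2: "l *s (\<beta> *s v) = (\<beta> * l) *s v" by (simp add: vector_smult_assoc mult.commute)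
  show ?thesis unfolding 1 2 by simp
qed

lemma AL_bound: "norm (A *v y - l *s y) \<le> (frob A + cmod l) * norm y"
proof -
  have "norm (A *v y - l *s y) \<le> norm (A *v y) + norm (l *s y)" by (rule norm_triangle_ineq4)
  also have "\<dots> \<le> frob A * norm y + cmod l * norm y" using norm_mat[of A y] by (simp add: norm_scale)
  finally show ?thesis by (simp add: algebra_simps)
qed

lemma x_minus_proj: "x - proj_perp v x = (cinner x v / cinner v v) *s v"
  by (simp add: proj_perp_def)

lemma decomp:
  fixes A A' :: "complex^'n^'n"
  shows "A' *v x - l' *s x = (A *v z - l *s z) + (A *v (x - z) - l *s (x - z)) + ((A' - A) *v x - (l' - l) *s x)"
  by (simp add: matrix_vector_mult_diff_distrib vector_ssub_ldistrib matrix_vector_mult_diff_rdistrib vector_sub_rdistrib)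

lemma upper_geo:
  assumes v: "v \<noteq> 0" and v': "v' \<noteq> 0" and eig: "A *v v = l *s v" and fA': "frob A' = 1"
    and l1: "cmod l \<le> 1" and xT: "x \<in> tangent v'"
  shows "norm (Alv A l v (proj_perp v x)) \<le> norm (Alv A' l' v' x)
           + (frob (A' - A) + cmod (l' - l) + (2 + cmod (l' - l)) * (norm (proj_perp v v') / norm v')) * norm x"
proof -
  define z where "z = proj_perp v x"
  define u where "u = A' *v x - l' *s x"
  define w where "w = (A' - A) *v x - (l' - l) *s x"
  define S1 where "S1 = norm (proj_perp v v') / norm v'"
  define a where "a = frob (A' - A)"
  define b where "b = cmod (l' - l)"
  have S1: "S1 \<ge> 0" by (simp add: S1_def)
  have zero: "A *v (x - z) - l *s (x - z) = 0"
    unfolding z_def x_minus_proj by (rule kill_eig[OF eig])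
  have u: "u = (A *v z - l *s z) + w"
    using decomp[of A' x l' A z l] zero by (simp add: u_def w_def)
  have Pu: "proj_perp v u = Alv A l v z + proj_perp v w"
    unfolding u Alv_def by (rule proj_perp_add)
  have w: "norm w \<le> (a + b) * norm x"
  proof -
    have "norm w \<le> norm ((A' - A) *v x) + norm ((l' - l) *s x)" unfolding w_def by (rule norm_triangle_ineq4)
    also have "\<dots> \<le> a * norm x + b * norm x"
    proof -
      have "norm ((l' - l) *s x) = b * norm x" by (simp only: norm_scale b_def)
      thus ?thesis using norm_mat[of "A' - A" x] unfolding a_def by linarith
    qed
    finally show ?thesis by (simp add: algebra_simps)
  qed
  have nu: "norm u \<le> (2 + b) * norm x"
  proof -
    have "cmod l' \<le> cmod l + b" unfolding b_def by (metis norm_triangle_ineq2 add.commute diff_le_eq)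
    hence "cmod l' \<le> 1 + b" using l1 by simp
    hence "(frob A' + cmod l') * norm x \<le> (2 + b) * norm x" using fA' by (intro mult_right_mono) auto
    thus ?thesis using AL_bound[of A' x l'] unfolding u_def by simp
  qed
  have "norm (proj_perp v u) \<le> norm (proj_perp v' u) + norm u * S1"
    using proj_compare[OF v' v, of u] by (simp add: S1_def)
  also have "\<dots> \<le> norm (Alv A' l' v' x) + (2 + b) * norm x * S1"
    using nu S1 by (simp add: Alv_def u_def mult_right_mono)
  finally have Pu2: "norm (proj_perp v u) \<le> norm (Alv A' l' v' x) + (2 + b) * norm x * S1" .
  have "norm (Alv A l v z) \<le> norm (proj_perp v u) + norm (proj_perp v w)"
    using Pu norm_triangle_ineq4[of "proj_perp v u" "proj_perp v w"] by simp
  also have "\<dots> \<le> norm (Alv A' l' v' x) + (2 + b) * norm x * S1 + (a + b) * norm x"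
    using Pu2 w proj_perp_norm_le[of v w] by linarith
  finally show ?thesis by (simp add: z_def S1_def a_def b_def algebra_simps)
qed

lemma scale_AL:
  fixes A :: "complex^'n^'n"
  shows "A *v (c *s y) - l *s (c *s y) = c *s (A *v y - l *s y)"
proof -
  have "l *s (c *s y) = c *s (l *s y)" by (simp add: vec_eq_iff mult.left_commute)
  thus ?thesis by (simp add: mat_scale vector_ssub_ldistrib)
qed

lemma add_AL:
  fixes A :: "complex^'n^'n"
  shows "A *v (y1 + y2) - l *s (y1 + y2) = (A *v y1 - l *s y1) + (A *v y2 - l *s y2)"
  by (simp add: matrix_vector_right_distrib vector_add_ldistrib)

lemma lower_geo:
  fixes A A' :: "complex^'n^'n"
  assumes v: "v \<noteq> 0" and v': "v' \<noteq> 0" and eig: "A *v v = l *s v" and fA: "frob A = 1"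
    and l1: "cmod l \<le> 1" and zT: "z \<in> tangent v"
  shows "norm (Alv A' l' v' (proj_perp v' z)) \<le> norm (Alv A l v z)
           + (2 * (norm (proj_perp v' v) / norm v) + 2 * (norm (proj_perp v v') / norm v')\<^sup>2
              + frob (A' - A) + cmod (l' - l)) * norm z"
proof -
  define x where "x = proj_perp v' z"
  define r where "r = A *v z - l *s z"
  define w where "w = (A' - A) *v x - (l' - l) *s x"
  define q where "q = A *v (x - z) - l *s (x - z)"
  define S1 where "S1 = norm (proj_perp v v') / norm v'"
  define S2 where "S2 = norm (proj_perp v' v) / norm v"
  define Pn where "Pn = norm (proj_perp v v')"
  define a where "a = frob (A' - A)"
  define b where "b = cmod (l' - l)"
  define \<gamma> where "\<gamma> = cinner z v' / cinner v' v'"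
  have S2: "S2 \<ge> 0" by (simp add: S2_def)
  have nx: "norm x \<le> norm z" unfolding x_def by (rule proj_perp_norm_le)
  have dec: "A' *v x - l' *s x = r + q + w"
    using decomp[of A' x l' A z l] by (simp add: r_def q_def w_def)
  have zx: "z - x = \<gamma> *s v'"
    using x_minus_proj[of z v'] by (simp add: x_def \<gamma>_def)
  have xz: "x - z = (- \<gamma>) *s v'"
    using zx by (metis minus_diff_eq vector_smult_lneg)
  have q1: "q = (- \<gamma>) *s (A *v v' - l *s v')"
    unfolding q_def xz by (rule scale_AL)
  have vv: "A *v v' - l *s v' = A *v (proj_perp v v') - l *s (proj_perp v v')"
  proof -
    have "v' = proj_perp v v' + (cinner v' v / cinner v v) *s v" using x_minus_proj[of v' v] by (metis add.commute diff_add_cancel)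
    hence "A *v v' - l *s v' = (A *v (proj_perp v v') - l *s (proj_perp v v'))
            + (A *v ((cinner v' v / cinner v v) *s v) - l *s ((cinner v' v / cinner v v) *s v))"
      by (metis add_AL)
    thus ?thesis using kill_eig[OF eig] by simp
  qed
  have nAv: "norm (A *v v' - l *s v') \<le> 2 * Pn"
  proof -
    have "norm (A *v v' - l *s v') \<le> (frob A + cmod l) * Pn" unfolding vv Pn_def by (rule AL_bound)
    also have "\<dots> \<le> 2 * Pn" using fA l1 by (intro mult_right_mono) (auto simp: Pn_def)
    finally show ?thesis .
  qed
  have cg: "cmod \<gamma> \<le> norm z * Pn / (norm v')\<^sup>2"
  proof -
    have "cmod \<gamma> = cmod (cinner z v') / (norm v')\<^sup>2"
      by (simp add: \<gamma>_def cinner_self norm_divide norm_power)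
    also have "\<dots> \<le> norm z * Pn / (norm v')\<^sup>2"
      using orth_bound[OF v, of z v'] zT by (intro divide_right_mono) (auto simp: tangent_def Pn_def)
    finally show ?thesis .
  qed
  have nq: "norm q \<le> 2 * S1\<^sup>2 * norm z"
  proof -
    have "norm q = cmod \<gamma> * norm (A *v v' - l *s v')" unfolding q1 norm_scale by simp
    also have "\<dots> \<le> (norm z * Pn / (norm v')\<^sup>2) * (2 * Pn)"
      using cg nAv by (intro mult_mono) (auto simp: Pn_def)
    also have "\<dots> = 2 * S1\<^sup>2 * norm z" using v' by (simp add: S1_def Pn_def power2_eq_square field_simps)
    finally show ?thesis .
  qed
  have nw: "norm w \<le> (a + b) * norm z"
  proof -
    have "norm w \<le> norm ((A' - A) *v x) + norm ((l' - l) *s x)" unfolding w_def by (rule norm_triangle_ineq4)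
    moreover have "norm ((l' - l) *s x) = b * norm x" by (simp only: norm_scale b_def)
    moreover have "norm ((A' - A) *v x) \<le> a * norm x" using norm_mat[of "A' - A" x] by (simp add: a_def)
    moreover have "(a + b) * norm x \<le> (a + b) * norm z" using nx by (intro mult_left_mono) (auto simp: a_def b_def frob_nonneg)
    ultimately show ?thesis by (simp add: algebra_simps)
  qed
  have nr: "norm r \<le> 2 * norm z"
  proof -
    have "norm r \<le> (frob A + cmod l) * norm z" unfolding r_def by (rule AL_bound)
    also have "\<dots> \<le> 2 * norm z" using fA l1 by (intro mult_right_mono) auto
    finally show ?thesis .
  qed
  have Pr: "norm (proj_perp v' r) \<le> norm (Alv A l v z) + 2 * norm z * S2"
  proof -
    have "norm (proj_perp v' r) \<le> norm (proj_perp v r) + norm r * S2"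
      using proj_compare[OF v v', of r] by (simp add: S2_def)
    also have "\<dots> \<le> norm (Alv A l v z) + 2 * norm z * S2"
      using nr S2 by (simp add: Alv_def r_def mult_right_mono)
    finally show ?thesis .
  qed
  have eqM: "Alv A' l' v' x = proj_perp v' r + proj_perp v' q + proj_perp v' w"
    by (simp only: Alv_def dec proj_perp_add)
  have "norm (Alv A' l' v' x) \<le> norm (proj_perp v' r) + norm (proj_perp v' q) + norm (proj_perp v' w)"
    unfolding eqM using norm_triangle_ineq[of "proj_perp v' r + proj_perp v' q" "proj_perp v' w"]
      norm_triangle_ineq[of "proj_perp v' r" "proj_perp v' q"] by linarith
  also have "\<dots> \<le> norm (proj_perp v' r) + norm q + norm w"
    using proj_perp_norm_le[of v' q] proj_perp_norm_le[of v' w] by linarith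
  finally have "norm (Alv A' l' v' x) \<le> norm (Alv A l v z) + 2 * norm z * S2 + 2 * S1\<^sup>2 * norm z + (a + b) * norm z"
    using Pr nq nw by linarith
  thus ?thesis by (simp add: x_def S1_def S2_def a_def b_def algebra_simps)
qed



lemma s_facts:
  assumes v: "v \<noteq> 0" and v': "v' \<noteq> 0"
  shows "norm (proj_perp v v') / norm v' = sqrt (1 - (cmod (cinner v' v) / (norm v' * norm v))\<^sup>2)"
    and "norm (proj_perp v' v) / norm v = sqrt (1 - (cmod (cinner v' v) / (norm v' * norm v))\<^sup>2)"
    and "sqrt (1 - (cmod (cinner v' v) / (norm v' * norm v))\<^sup>2) \<le> dP v' v"
    and "0 \<le> dP v' v"
proof -
  define c where "c = cmod (cinner v' v) / (norm v' * norm v)"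
  have c0: "0 \<le> c" by (simp add: c_def)
  have c1: "c \<le> 1" using cs[of v' v] v v' by (simp add: c_def divide_le_eq_1)
  show "norm (proj_perp v v') / norm v' = sqrt (1 - (cmod (cinner v' v) / (norm v' * norm v))\<^sup>2)"
    using norm_proj_perp_eq[OF v v'] v' by simp
  have "norm (proj_perp v' v) = norm v * sqrt (1 - (cmod (cinner v v') / (norm v * norm v'))\<^sup>2)"
    by (rule norm_proj_perp_eq[OF v' v])
  also have "\<dots> = norm v * sqrt (1 - (cmod (cinner v' v) / (norm v' * norm v))\<^sup>2)"
    by (simp add: cmod_cinner_sym[of v v'] mult.commute)
  finally show "norm (proj_perp v' v) / norm v = sqrt (1 - (cmod (cinner v' v) / (norm v' * norm v))\<^sup>2)"
    using v by simp
  have d: "dP v' v = arccos c" by (simp add: dP_def c_def)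
  have "sqrt (1 - c\<^sup>2) = sin (arccos c)" using c0 c1 by (simp add: sin_arccos)
  also have "\<dots> \<le> arccos c" using c0 c1 by (intro sin_x_le_x arccos_lbound) auto
  finally show "sqrt (1 - (cmod (cinner v' v) / (norm v' * norm v))\<^sup>2) \<le> dP v' v"
    using d c_def by simp
  show "0 \<le> dP v' v" using d c0 c1 by (simp add: arccos_lbound)
qed

lemma l_le1:
  assumes eig: "A *v v = l *s v" and v: "v \<noteq> 0" and fA: "frob A = 1"
  shows "cmod l \<le> 1"
proof -
  have "cmod l * norm v = norm (A *v v)" using eig by (simp add: norm_scale)
  also have "\<dots> \<le> norm v" using norm_mat[of A v] fA by simp
  finally show ?thesis using v by simp
qed

lemma m_half:
  assumes G: "inv_opnorm A l v = ereal m" and zT: "z \<in> tangent v" and z0: "z \<noteq> 0"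
    and fA: "frob A = 1" and l1: "cmod l \<le> 1"
  shows "m \<ge> 1/2"
proof -
  have m0: "m \<ge> 0" using G_nonneg[of A l v] G by simp
  have "norm (Alv A l v z) \<le> norm (A *v z - l *s z)" unfolding Alv_def by (rule proj_perp_norm_le)
  also have "\<dots> \<le> (frob A + cmod l) * norm z" by (rule AL_bound)
  also have "\<dots> \<le> 2 * norm z" using fA l1 by (intro mult_right_mono) auto
  finally have "m * norm (Alv A l v z) \<le> m * (2 * norm z)" using m0 by (intro mult_left_mono)
  hence "norm z \<le> m * (2 * norm z)" using G_finite[OF G zT] by linarith
  hence "1 * norm z \<le> (2 * m) * norm z" by (simp add: algebra_simps)
  hence "1 \<le> 2 * m" using z0 by (subst (asm) mult_le_cancel_right) auto
  thus ?thesis by simp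
qed

lemma main_upper:
  fixes A A' :: "complex ^ 'n ^ 'n" and v v' :: "complex ^ 'n" and l l' :: complex and e :: real
  assumes fA: "frob A = 1" and fA': "frob A' = 1" and v: "v \<noteq> 0" and v': "v' \<noteq> 0"
    and eig: "A *v v = l *s v" and e0: "0 < e" and e1: "e \<le> 37/100"
    and G: "inv_opnorm A l v = ereal m"
    and Hm: "m * (frob (A' - A) + cmod (l' - l) + dP v' v) \<le> e * (5/36)"
  shows "inv_opnorm A' l' v' \<le> ereal (m * (1 + e))"
proof -
  define s where "s = sqrt (1 - (cmod (cinner v' v) / (norm v' * norm v))\<^sup>2)"
  define a where "a = frob (A' - A)"
  define b where "b = cmod (l' - l)"
  define d where "d = dP v' v"
  have S1: "norm (proj_perp v v') / norm v' = s" unfolding s_def by (rule s_facts(1)[OF v v'])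
  have S2: "norm (proj_perp v' v) / norm v = s" unfolding s_def by (rule s_facts(2)[OF v v'])
  have sd: "s \<le> d" unfolding s_def d_def by (rule s_facts(3)[OF v v'])
  have d0: "0 \<le> d" unfolding d_def by (rule s_facts(4)[OF v v'])
  have s0: "0 \<le> s" unfolding S1[symmetric] by simp
  have a0: "0 \<le> a" by (simp add: a_def frob_nonneg)
  have b0: "0 \<le> b" by (simp add: b_def)
  have l1: "cmod l \<le> 1" by (rule l_le1[OF eig v fA])
  have m0: "m \<ge> 0" using G_nonneg[of A l v] G by simp
  have main: "norm x \<le> (m * (1 + e)) * norm (Alv A' l' v' x)" if xT: "x \<in> tangent v'" for x
  proof -
    define z where "z = proj_perp v x"
    have zT: "z \<in> tangent v" by (simp add: z_def tangent_def proj_perp_orth[OF v])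
    have f1: "norm x - norm z \<le> s * norm x"
    proof -
      have "norm x - norm z \<le> norm (x - z)" by (rule norm_triangle_ineq2)
      also have "\<dots> = cmod (cinner x v) / norm v" unfolding z_def by (rule norm_minus_proj[OF v])
      also have "\<dots> \<le> norm x * norm (proj_perp v' v) / norm v"
        using orth_bound[OF v', of x v] xT v by (intro divide_right_mono) (auto simp: tangent_def)
      also have "\<dots> = s * norm x" unfolding S2[symmetric] by simp
      finally show ?thesis .
    qed
    have f2: "norm z \<le> m * norm (Alv A l v z)" by (rule G_finite[OF G zT])
    have f3: "norm (Alv A l v z) \<le> norm (Alv A' l' v' x) + (a + b + (2 + b) * s) * norm x"
      using upper_geo[OF v v' eig fA' l1 xT, of l'] S1 by (simp add: z_def a_def b_def)
    show ?thesis
    proof (cases "\<exists>z0\<in>tangent v. z0 \<noteq> 0")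
      case False
      have pT: "proj_perp v v' \<in> tangent v" by (simp add: tangent_def proj_perp_orth[OF v])
      hence "proj_perp v v' = 0" using False by blast
      hence "s = 0" using S1 by simp
      moreover have "z = 0" using zT False by blast
      ultimately have "norm x \<le> 0" using f1 by simp
      thus ?thesis by simp
    next
      case True
      then obtain z0 where z0: "z0 \<in> tangent v" "z0 \<noteq> 0" by blast
      have mh: "m \<ge> 1/2" by (rule m_half[OF G z0 fA l1])
      define t where "t = m * (a + b + d)"
      have t0: "0 \<le> t" using m0 a0 b0 d0 by (simp add: t_def)
      have te: "t \<le> e * (5/36)" using Hm by (simp add: t_def a_def b_def d_def)
      have k: "s + m * (a + b + (2 + b) * s) \<le> 4*t + 2*t\<^sup>2"
        by (rule ar_k[OF mh s0 sd a0 b0 t_def])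
      have at: "1 \<le> (1 + e) * (1 - 4*t - 2*t\<^sup>2)" by (rule ar_t[OF t0 te e0 e1])
      define k where "k = s + m * (a + b + (2 + b) * s)"
      have k1: "1 \<le> (1 + e) * (1 - k)"
      proof -
        have "(1 + e) * (1 - 4*t - 2*t\<^sup>2) \<le> (1 + e) * (1 - k)"
          using k e0 by (intro mult_left_mono) (auto simp: k_def)
        thus ?thesis using at by linarith
      qed
      have nk: "norm x * (1 - k) \<le> m * norm (Alv A' l' v' x)"
      proof -
        have "norm x * (1 - k) = norm x - s * norm x - m * ((a + b + (2 + b) * s) * norm x)"
          by (simp add: k_def algebra_simps)
        moreover have "m * norm (Alv A l v z) \<le> m * norm (Alv A' l' v' x) + m * ((a + b + (2 + b) * s) * norm x)"
          using mult_left_mono[OF f3 m0] by (simp add: algebra_simps)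
        ultimately show ?thesis using f1 f2 by linarith
      qed
      have n1: "1 * norm x \<le> ((1 + e) * (1 - k)) * norm x"
        using mult_right_mono[OF k1 norm_ge_zero] .
      have n2: "(1 + e) * (norm x * (1 - k)) \<le> (1 + e) * (m * norm (Alv A' l' v' x))"
        using mult_left_mono[OF nk] e0 by simp
      have n3: "((1 + e) * (1 - k)) * norm x = (1 + e) * (norm x * (1 - k))" by (simp add: algebra_simps)
      have "norm x \<le> (1 + e) * (m * norm (Alv A' l' v' x))"
        using n1 n2 n3 by linarith
      thus ?thesis by (simp add: algebra_simps)
    qed
  qed
  show ?thesis
    by (rule G_bound[OF v']) (use m0 e0 main in auto)
qed

lemma main_lower:
  fixes A A' :: "complex ^ 'n ^ 'n" and v v' :: "complex ^ 'n" and l l' :: complex and e :: real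
  assumes fA: "frob A = 1" and fA': "frob A' = 1" and v: "v \<noteq> 0" and v': "v' \<noteq> 0"
    and eig: "A *v v = l *s v" and e0: "0 < e" and e1: "e \<le> 37/100"
    and G': "inv_opnorm A' l' v' = ereal m'"
    and H: "inv_opnorm A l v * ereal (frob (A' - A) + cmod (l' - l) + dP v' v) \<le> ereal (e * (5/36))"
  shows "inv_opnorm A l v \<le> ereal (m' * (1 + e))"
proof -
  define s where "s = sqrt (1 - (cmod (cinner v' v) / (norm v' * norm v))\<^sup>2)"
  define a where "a = frob (A' - A)"
  define b where "b = cmod (l' - l)"
  define d where "d = dP v' v"
  have S1: "norm (proj_perp v v') / norm v' = s" unfolding s_def by (rule s_facts(1)[OF v v'])
  have S2: "norm (proj_perp v' v) / norm v = s" unfolding s_def by (rule s_facts(2)[OF v v'])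
  have sd: "s \<le> d" unfolding s_def d_def by (rule s_facts(3)[OF v v'])
  have d0: "0 \<le> d" unfolding d_def by (rule s_facts(4)[OF v v'])
  have s0: "0 \<le> s" unfolding S1[symmetric] by simp
  have a0: "0 \<le> a" by (simp add: a_def frob_nonneg)
  have b0: "0 \<le> b" by (simp add: b_def)
  have l1: "cmod l \<le> 1" by (rule l_le1[OF eig v fA])
  have m'0: "m' \<ge> 0" using G_nonneg[of A' l' v'] G' by simp
  define \<eta> where "\<eta> = 2 * s + 2 * s\<^sup>2 + a + b"
  have \<eta>0: "0 \<le> \<eta>" using s0 a0 b0 by (simp add: \<eta>_def)
  have key: "(1 - s) * norm z \<le> m' * (norm (Alv A l v z) + \<eta> * norm z)" if zT: "z \<in> tangent v" for z
  proof -
    define x where "x = proj_perp v' z"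
    have xT: "x \<in> tangent v'" by (simp add: x_def tangent_def proj_perp_orth[OF v'])
    have f1: "norm z - norm x \<le> s * norm z"
    proof -
      have "norm z - norm x \<le> norm (z - x)" by (rule norm_triangle_ineq2)
      also have "\<dots> = cmod (cinner z v') / norm v'" unfolding x_def by (rule norm_minus_proj[OF v'])
      also have "\<dots> \<le> norm z * norm (proj_perp v v') / norm v'"
        using orth_bound[OF v, of z v'] zT v' by (intro divide_right_mono) (auto simp: tangent_def)
      also have "\<dots> = s * norm z" unfolding S1[symmetric] by simp
      finally show ?thesis .
    qed
    have f2: "norm x \<le> m' * norm (Alv A' l' v' x)" by (rule G_finite[OF G' xT])
    have f3: "norm (Alv A' l' v' x) \<le> norm (Alv A l v z) + \<eta> * norm z"
      using lower_geo[OF v v' eig fA l1 zT, of A' l'] S1 S2 by (simp add: x_def a_def b_def \<eta>_def)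
    have "m' * norm (Alv A' l' v' x) \<le> m' * (norm (Alv A l v z) + \<eta> * norm z)"
      by (rule mult_left_mono[OF f3 m'0])
    moreover have "(1 - s) * norm z = norm z - s * norm z" by (simp add: algebra_simps)
    ultimately show ?thesis using f1 f2 by linarith
  qed
  show ?thesis
  proof (cases "inv_opnorm A l v = \<infinity>")
    case True
    have "a + b + d \<le> 0"
    proof (rule ccontr)
      assume "\<not> a + b + d \<le> 0"
      hence inf: "inv_opnorm A l v * ereal (a + b + d) = \<infinity>" using True by simp
      have H2: "inv_opnorm A l v * ereal (a + b + d) \<le> ereal (e * (5/36))"
        unfolding a_def b_def d_def by (rule H)
      have "\<infinity> \<le> ereal (e * (5/36))" using H2 by (simp only: inf)
      thus False by simp
    qed
    hence "a = 0" "b = 0" "d = 0" using a0 b0 d0 by auto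
    hence "s = 0" "\<eta> = 0" using sd s0 by (auto simp: \<eta>_def)
    have "norm z \<le> (m' * (1 + e)) * norm (Alv A l v z)" if zT: "z \<in> tangent v" for z
    proof -
      have "norm z \<le> m' * norm (Alv A l v z)" using key[OF zT] \<open>s = 0\<close> \<open>\<eta> = 0\<close> by simp
      also have "\<dots> \<le> (m' * (1 + e)) * norm (Alv A l v z)"
        using m'0 e0 by (intro mult_right_mono) (auto simp: mult_le_cancel_left1)
      finally show ?thesis .
    qed
    thus ?thesis by (intro G_bound[OF v]) (use m'0 e0 in auto)
  next
    case False
    obtain m where G: "inv_opnorm A l v = ereal m"
      using False G_nonneg[of A l v] by (cases "inv_opnorm A l v") auto
    have m0: "m \<ge> 0" using G_nonneg[of A l v] G by simp
    define t where "t = m * (a + b + d)"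
    have te: "t \<le> e * (5/36)" using H G by (simp add: t_def a_def b_def d_def)
    have t0: "0 \<le> t" using m0 a0 b0 d0 by (simp add: t_def)
    have "norm z \<le> (m' * (1 + e)) * norm (Alv A l v z)" if zT: "z \<in> tangent v" for z
    proof (cases "z = 0")
      case True thus ?thesis by simp
    next
      case False
      have mh: "m \<ge> 1/2" by (rule m_half[OF G zT False fA l1])
      have k2: "m * \<eta> \<le> 2*t + 4*t\<^sup>2" "s \<le> 2*t"
        using ar_k2[OF mh s0 sd a0 b0 t_def] by (simp_all add: \<eta>_def)
      have at: "1 + 2*t + 4*t\<^sup>2 \<le> (1 + e) * (1 - 2*t)" by (rule ar_t2[OF t0 te e0 e1])
      have "(1 + e) * (1 - 2*t) \<le> (1 + e) * (1 - s)" using k2(2) e0 by (intro mult_left_mono) auto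
      hence c1: "1 + m * \<eta> \<le> (1 + e) * (1 - s)" using at k2(1) by linarith
      have s1: "0 < 1 - s" using k2(2) te e1 by linarith
      have fz: "norm z \<le> m * norm (Alv A l v z)" by (rule G_finite[OF G zT])
      have "m' * (\<eta> * norm z) \<le> m' * (\<eta> * (m * norm (Alv A l v z)))"
        using fz m'0 \<eta>0 by (intro mult_left_mono) auto
      hence "(1 - s) * norm z \<le> m' * norm (Alv A l v z) * (1 + m * \<eta>)"
        using key[OF zT] by (simp add: algebra_simps)
      also have "\<dots> \<le> m' * norm (Alv A l v z) * ((1 + e) * (1 - s))"
        using c1 m'0 by (intro mult_left_mono) auto
      also have "\<dots> = (1 - s) * ((m' * (1 + e)) * norm (Alv A l v z))" by (simp add: algebra_simps)
      finally show ?thesis using s1 by (simp add: mult_le_cancel_left_pos)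
    qed
    thus ?thesis by (intro G_bound[OF v]) (use m'0 e0 in auto)
  qed
qed

theorem proposition4p1:
  fixes A A' :: "complex ^ 'n ^ 'n" and v v' :: "complex ^ 'n"
    and l l' :: complex and \<epsilon> :: real
  assumes "frob A = 1" and "frob A' = 1"
    and "v \<noteq> 0" and "v' \<noteq> 0"
    and "A *v v = l *s v"
    and "0 < \<epsilon>" and "\<epsilon> \<le> 0.37"
    and "mu A l v * ereal (frob (A' - A) + cmod (l' - l) + dP v' v) \<le> ereal (\<epsilon> / 7.2)"
  shows "ereal (1 / (1 + \<epsilon>)) * mu A l v \<le> mu A' l' v'
       \<and> mu A' l' v' \<le> ereal (1 + \<epsilon>) * mu A l v"
proof -
  have muA: "mu A l v = inv_opnorm A l v" using assms(1) by (simp add: mu_def)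
  have muA': "mu A' l' v' = inv_opnorm A' l' v'" using assms(2) by (simp add: mu_def)
  have e1: "\<epsilon> \<le> 37/100" using assms(7) by simp
  have H: "inv_opnorm A l v * ereal (frob (A' - A) + cmod (l' - l) + dP v' v) \<le> ereal (\<epsilon> * (5/36))"
    using assms(8) muA by simp
  have up: "inv_opnorm A' l' v' \<le> ereal (1 + \<epsilon>) * inv_opnorm A l v"
  proof (cases "inv_opnorm A l v = \<infinity>")
    case True thus ?thesis using assms(6) by simp
  next
    case False
    obtain m where G: "inv_opnorm A l v = ereal m"
      using False G_nonneg[of A l v] by (cases "inv_opnorm A l v") auto
    have Hm: "m * (frob (A' - A) + cmod (l' - l) + dP v' v) \<le> \<epsilon> * (5/36)" using H G by simp
    have "inv_opnorm A' l' v' \<le> ereal (m * (1 + \<epsilon>))"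
      by (rule main_upper[OF assms(1-6) e1 G Hm])
    thus ?thesis using G by (simp add: mult.commute)
  qed
  have lo: "ereal (1 / (1 + \<epsilon>)) * inv_opnorm A l v \<le> inv_opnorm A' l' v'"
  proof (cases "inv_opnorm A' l' v' = \<infinity>")
    case True thus ?thesis by simp
  next
    case False
    obtain m' where G': "inv_opnorm A' l' v' = ereal m'"
      using False G_nonneg[of A' l' v'] by (cases "inv_opnorm A' l' v'") auto
    have b: "inv_opnorm A l v \<le> ereal (m' * (1 + \<epsilon>))"
      by (rule main_lower[OF assms(1-6) e1 G' H])
    then obtain g where g: "inv_opnorm A l v = ereal g"
      using G_nonneg[of A l v] by (cases "inv_opnorm A l v") auto
    have "g \<le> m' * (1 + \<epsilon>)" using b g by simp
    hence "g / (1 + \<epsilon>) \<le> m'" using assms(6) by (simp add: divide_le_eq)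
    thus ?thesis using g G' by simp
  qed
  show ?thesis using up lo muA muA' by simp
qed


end
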